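(* For every triangle $ABC$ with $b=c>a$, we have $AX_{7}<AX_{29}<AX_{4}$; that is, in the isosceles order, $X_{7}\prec X_{29}\prec X_{4}$.
   Context: $X_n$ denotes the $n$-th triangle center listed in Kimberling's Encyclopedia of Triangle Centers (ETC), given by barycentric coordinates in terms of $a=BC$, $b=CA$, $c=AB$. The isosceles order: $P\prec Q$ if $P$ is closer to $A$ than $Q$ in every isosceles triangle $ABC$ with $b=c>a$. *)

theory Defs
  imports "HOL-Analysis.Analysis"
begin

text \<open>Points of the Euclidean plane are modelled as complex numbers.
  The point with (unnormalised) barycentric coordinates u : v : w with
  respect to the triangle ABC.\<close>
definition bary :: "complex \<Rightarrow> complex \<Rightarrow> complex \<Rightarrow> real \<Rightarrow> real \<Rightarrow> real \<Rightarrow> complex" where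
  "bary A B C u v w = (1 / (u + v + w)) *\<^sub>R (u *\<^sub>R A + v *\<^sub>R B + w *\<^sub>R C)"

definition sa :: "complex \<Rightarrow> complex \<Rightarrow> complex \<Rightarrow> real" where "sa A B C = dist B C"
definition sb :: "complex \<Rightarrow> complex \<Rightarrow> complex \<Rightarrow> real" where "sb A B C = dist C A"
definition sc :: "complex \<Rightarrow> complex \<Rightarrow> complex \<Rightarrow> real" where "sc A B C = dist A B"

text \<open>X(4), orthocenter: 1/(b^2+c^2-a^2), written polynomially.\<close>
definition f4 :: "real \<Rightarrow> real \<Rightarrow> real \<Rightarrow> real" where
  "f4 a b c = (a^2 + c^2 - b^2) * (a^2 + b^2 - c^2)"

text \<open>X(7), Gergonne point: 1/(b+c-a), written polynomially.\<close>
definition f7 :: "real \<Rightarrow> real \<Rightarrow> real \<Rightarrow> real" where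
  "f7 a b c = (a + b - c) * (a - b + c)"

text \<open>X(29), cevapoint of X(1) and X(4); trilinears sec A/(cos B + cos C),
  i.e. barycentrics S_B S_C / ((b+c)(a+b-c)(a-b+c)).\<close>
definition f29 :: "real \<Rightarrow> real \<Rightarrow> real \<Rightarrow> real" where
  "f29 a b c = (a^2 + c^2 - b^2) * (a^2 + b^2 - c^2) / ((b + c) * (a + b - c) * (a - b + c))"

definition center :: "(real \<Rightarrow> real \<Rightarrow> real \<Rightarrow> real) \<Rightarrow> complex \<Rightarrow> complex \<Rightarrow> complex \<Rightarrow> complex" where
  "center f A B C = (let a = sa A B C; b = sb A B C; c = sc A B C
     in bary A B C (f a b c) (f b c a) (f c a b))"

definition X4 where "X4 = center f4"
definition X7 where "X7 = center f7"
definition X29 where "X29 = center f29"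

end

theory Submission
  imports Defs
begin

lemma bary_iso:
  fixes A B C :: complex and p q :: real
  assumes "p + 2*q \<noteq> 0"
  shows "dist A (bary A B C p q q) = \<bar>2*q/(p+2*q)\<bar> * dist A (midpoint B C)"
proof -
  have h: "complex_of_real p + complex_of_real q * 2 \<noteq> 0"
    using assms by (metis mult.commute of_real_add of_real_eq_0_iff of_real_mult of_real_numeral)
  have h2: "complex_of_real p * 2 + complex_of_real q * 4 \<noteq> 0"
  proof -
    have eq: "complex_of_real p * 2 + complex_of_real q * 4 = 2*(complex_of_real p + complex_of_real q * 2)" by simp
    show ?thesis unfolding eq using h by (metis mult_eq_0_iff zero_neq_numeral)
  qed
  have "bary A B C p q q - A = (2*q/(p+2*q)) *\<^sub>R (midpoint B C - A)"
    using h h2 unfolding bary_def midpoint_def scaleR_conv_of_real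
    by (simp add: field_simps)
  then have "norm (bary A B C p q q - A) = \<bar>2*q/(p+2*q)\<bar> * norm (midpoint B C - A)"
    by simp
  then show ?thesis by (simp add: dist_norm norm_minus_commute)
qed

lemma gen29:
  fixes a b D N :: real assumes "a>0" "b>0" "D>0" "N>0"
  shows "2*(a*N/D)/(a^2/(2*b) + 2*(a*N/D)) = 4*b*N/(4*b*N + a*D)"
proof -
  have "4*b*N + a*D > 0" using assms by (simp add: add_pos_pos)
  moreover have "D*(a*a) + N*(a*(b*4)) > 0" using assms by (simp add: add_pos_pos)
  ultimately show ?thesis using assms by (simp add: field_simps power2_eq_square)
qed

lemma fracless:
  fixes X Y Z W :: real assumes "0<Y" "0<W" "X*W < Z*Y" shows "X/Y < Z/W"
  using assms by (simp add: divide_simps)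

lemma ineqs:
  fixes a b :: real assumes "0 < a" "a < b"
  shows "2*f7 b b a/(f7 a b b+2*f7 b b a) < 2*f29 b b a/(f29 a b b+2*f29 b b a)"
    "2*f29 b b a/(f29 a b b+2*f29 b b a) < 2*f4 b b a/(f4 a b b+2*f4 b b a)"
    "0 < 2*f7 b b a/(f7 a b b+2*f7 b b a)"
    "f7 a b b+2*f7 b b a \<noteq> 0" "f29 a b b+2*f29 b b a \<noteq> 0" "f4 a b b+2*f4 b b a \<noteq> 0"
proof -
  have p1: "2*b - a > 0" "4*b-a > 0" "2*b^2-a^2 > 0" "4*b^2-a^2>0" "a+b>0"
  proof -
    have m: "a*a < b*b" using assms by (intro mult_strict_mono) auto
    have m2: "0 < b*b" using assms by simp
    have "a^2 < b^2" "0 < b^2" using m m2 by (simp_all add: power2_eq_square)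
    then show "2*b - a > 0" "4*b-a > 0" "2*b^2-a^2 > 0" "4*b^2-a^2>0" "a+b>0"
      using assms by linarith+
  qed
  have e7: "2*f7 b b a/(f7 a b b+2*f7 b b a) = 2*(2*b-a)/(4*b-a)"
    using assms p1 unfolding f7_def by (simp add: field_simps power2_eq_square)
  have e4: "2*f4 b b a/(f4 a b b+2*f4 b b a) = 2*(2*b^2-a^2)/(4*b^2-a^2)"
    using assms p1 unfolding f4_def by (simp add: field_simps power2_eq_square)
  have e29: "2*f29 b b a/(f29 a b b+2*f29 b b a) = 4*b*(2*b^2-a^2)/(4*b*(2*b^2-a^2)+a*(a+b)*(2*b-a))"
  proof -
    have u: "f29 a b b = a^2/(2*b)" unfolding f29_def using assms by (simp add: field_simps power2_eq_square)
    have v0: "f29 b b a = (a*(a*(2*b^2-a^2)))/(a*((a+b)*(2*b-a)))" unfolding f29_def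
      by (simp add: algebra_simps power2_eq_square)
    have v: "f29 b b a = a*(2*b^2-a^2)/((a+b)*(2*b-a))" unfolding v0 using assms
      by (subst mult_divide_mult_cancel_left) auto
    have "4*b*(2*b^2-a^2) + a*((a+b)*(2*b-a)) = 4*b*(2*b^2-a^2)+a*(a+b)*(2*b-a)" by simp
    then show ?thesis unfolding u v using gen29[of a b "(a+b)*(2*b-a)" "2*b^2-a^2"] assms p1 by simp
  qed
  show "0 < 2*f7 b b a/(f7 a b b+2*f7 b b a)" using e7 p1 by simp
  show "f7 a b b+2*f7 b b a \<noteq> 0" using assms p1 unfolding f7_def by (simp add: field_simps power2_eq_square)
  show "f4 a b b+2*f4 b b a \<noteq> 0" using assms p1 unfolding f4_def by (simp add: field_simps power2_eq_square)
  show "f29 a b b+2*f29 b b a \<noteq> 0"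
  proof -
    have u: "f29 a b b = a^2/(2*b)" unfolding f29_def using assms by (simp add: field_simps power2_eq_square)
    have v0: "f29 b b a = (a*(a*(2*b^2-a^2)))/(a*((a+b)*(2*b-a)))" unfolding f29_def
      by (simp add: algebra_simps power2_eq_square)
    have v: "f29 b b a = a*(2*b^2-a^2)/((a+b)*(2*b-a))" unfolding v0 using assms
      by (subst mult_divide_mult_cancel_left) auto
    have "f29 a b b > 0" "f29 b b a > 0" unfolding u v using assms p1 by simp_all
    then show ?thesis by simp
  qed
  have k1: "(a+b)*(2*b-a)^2 < 2*b*(2*b^2-a^2)"
  proof -
    have "2*b*(2*b^2-a^2) - (a+b)*(2*b-a)^2 = a^2*(b-a)" by (simp add: algebra_simps power2_eq_square power3_eq_cube)
    moreover have "a^2*(b-a) > 0" using assms by simp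
    ultimately show ?thesis by linarith
  qed
  have k2: "(a+b)*(2*b-a) > 2*a*b"
  proof -
    have "(a+b)*(2*b-a) - 2*a*b = (b-a)*(2*b+a)" by (simp add: algebra_simps)
    moreover have "(b-a)*(2*b+a) > 0" using assms by simp
    ultimately show ?thesis by linarith
  qed
  show "2*f7 b b a/(f7 a b b+2*f7 b b a) < 2*f29 b b a/(f29 a b b+2*f29 b b a)"
    unfolding e7 e29
  proof (rule fracless)
    show "0 < 4*b-a" using p1 by simp
    show "0 < 4*b*(2*b^2-a^2)+a*(a+b)*(2*b-a)" using p1 assms by (simp add: add_pos_pos)
    have "4*b*(2*b^2-a^2)*(4*b-a) - 2*(2*b-a)*(4*b*(2*b^2-a^2)+a*(a+b)*(2*b-a))
      = 2*a*(2*b*(2*b^2-a^2) - (a+b)*(2*b-a)^2)" by (simp add: algebra_simps power2_eq_square)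
    moreover have "2*a*(2*b*(2*b^2-a^2) - (a+b)*(2*b-a)^2) > 0" using k1 assms by simp
    ultimately show "2*(2*b-a)*(4*b*(2*b^2-a^2)+a*(a+b)*(2*b-a)) < 4*b*(2*b^2-a^2)*(4*b-a)" by linarith
  qed
  show "2*f29 b b a/(f29 a b b+2*f29 b b a) < 2*f4 b b a/(f4 a b b+2*f4 b b a)"
    unfolding e4 e29
  proof (rule fracless)
    show "0 < 4*b^2-a^2" using p1 by simp
    show "0 < 4*b*(2*b^2-a^2)+a*(a+b)*(2*b-a)" using p1 assms by (simp add: add_pos_pos)
    have "2*(2*b^2-a^2)*(4*b*(2*b^2-a^2)+a*(a+b)*(2*b-a)) - 4*b*(2*b^2-a^2)*(4*b^2-a^2)
      = 2*a*(2*b^2-a^2)*((a+b)*(2*b-a) - 2*a*b)" by (simp add: algebra_simps power2_eq_square)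
    moreover have "2*a*(2*b^2-a^2)*((a+b)*(2*b-a) - 2*a*b) > 0" using k2 assms p1 by simp
    ultimately show "4*b*(2*b^2-a^2)*(4*b^2-a^2) < 2*(2*b^2-a^2)*(4*b*(2*b^2-a^2)+a*(a+b)*(2*b-a))" by linarith
  qed
qed

theorem theorem3p8:
  fixes A B C :: complex
  assumes "\<not> collinear {A, B, C}"
    and "sb A B C = sc A B C"
    and "sb A B C > sa A B C"
  shows "dist A (X7 A B C) < dist A (X29 A B C) \<and> dist A (X29 A B C) < dist A (X4 A B C)"
proof -
  define a where "a = sa A B C"
  define b where "b = sb A B C"
  have bc: "sc A B C = b" using assms(2) b_def by simp
  have ab: "a < b" using assms(3) a_def b_def by simp
  have BC: "B \<noteq> C"
  proof
    assume "B = C" then have "{A,B,C} = {A,B}" by auto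
    then show False using assms(1) by simp
  qed
  then have a0: "0 < a" unfolding a_def sa_def by simp
  have AM: "A \<noteq> midpoint B C"
  proof
    assume h: "A = midpoint B C"
    have "collinear {B, midpoint B C, C}" by (rule collinear_midpoint)
    then have "collinear {A,B,C}" unfolding h by (simp add: insert_commute)
    then show False using assms(1) by simp
  qed
  define d where "d = dist A (midpoint B C)"
  have d0: "0 < d" using AM d_def by simp
  have I: "\<And>f. (\<And>x y z. f x y z = f x z y) \<Longrightarrow> f a b b + 2 * f b b a \<noteq> 0 \<Longrightarrow>
      dist A (center f A B C) = \<bar>2*f b b a/(f a b b + 2*f b b a)\<bar> * d"
  proof -
    fix f :: "real \<Rightarrow> real \<Rightarrow> real \<Rightarrow> real"
    assume s: "\<And>x y z. f x y z = f x z y" and nz: "f a b b + 2 * f b b a \<noteq> 0"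
    have "center f A B C = bary A B C (f a b b) (f b b a) (f b b a)"
      unfolding center_def Let_def a_def[symmetric] b_def[symmetric] bc using s[of b a b] by simp
    then show "dist A (center f A B C) = \<bar>2*f b b a/(f a b b + 2*f b b a)\<bar> * d"
      using bary_iso[OF nz, of A B C] d_def by simp
  qed
  have s7: "\<And>x y z. f7 x y z = f7 x z y" unfolding f7_def by (simp add: algebra_simps)
  have s4: "\<And>x y z. f4 x y z = f4 x z y" unfolding f4_def by (simp add: algebra_simps)
  have s29: "\<And>x y z. f29 x y z = f29 x z y" unfolding f29_def by (simp add: algebra_simps)
  note q = ineqs[OF a0 ab]
  have D7: "dist A (X7 A B C) = (2*f7 b b a/(f7 a b b + 2*f7 b b a)) * d"
    unfolding X7_def I[OF s7 q(4)] abs_of_pos[OF q(3)] ..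
  have D29: "dist A (X29 A B C) = (2*f29 b b a/(f29 a b b + 2*f29 b b a)) * d"
    unfolding X29_def I[OF s29 q(5)] abs_of_pos[OF less_trans[OF q(3) q(1)]] ..
  have D4: "dist A (X4 A B C) = (2*f4 b b a/(f4 a b b + 2*f4 b b a)) * d"
    unfolding X4_def I[OF s4 q(6)] abs_of_pos[OF less_trans[OF less_trans[OF q(3) q(1)] q(2)]] ..
  show ?thesis unfolding D7 D29 D4
    using mult_strict_right_mono[OF q(1) d0] mult_strict_right_mono[OF q(2) d0] by (simp only:)
qed

end
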